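(* Let $\varphi\colon\mathcal{M}\to\mathcal{X}$ be a continuous surjective map from a Hausdorff, second-countable, locally compact topological space $\mathcal{M}$ to a metric space $(\mathcal{X},\mathrm{dist})$, let $y\in\mathcal{M}$ and $x=\varphi(y)$. The following are equivalent: (i) $\varphi$ is open at $y$; (ii) $\varphi$ is approximately open at $y$; (iii) $\varphi$ satisfies the Subsequence Lifting Property at $y$; (iv) $\varphi$ satisfies the Approximate Subsequence Lifting Property at $y$; (v) $\varphi$ satisfies "local $\Rightarrow$ local" at $y$.
   Context: (i) Open at $y$: $\varphi(U)$ is a neighborhood of $x$ in $\mathcal{X}$ for every neighborhood $U$ of $y$. (ii) Approximately open at $y$: the closure $\overline{\varphi(U)}$ is a neighborhood of $x$ for every neighborhood $U$ of $y$. (iii) SLP at $y$: for every sequence $(x_i)\subseteq\mathcal{X}$ converging to $x$ there exist a subsequence $(x_{i_j})$ and a sequence $(y_{i_j})\subseteq\mathcal{M}$ converging to $y$ with $\varphi(y_{i_j})=x_{i_j}$ for all $j$. (iv) ASLP at $y$: for every sequence $(x_i)\subseteq\mathcal{X}$ converging to $x$ and every sequence $(\epsilon_i)\subseteq\mathbb{R}_{>0}$ converging to $0$ there exist a subsequence indexed by $(i_j)$ and a sequence $(y_{i_j})\subseteq\mathcal{M}$ converging to $y$ with $\mathrm{dist}(\varphi(y_{i_j}),x_{i_j})\le\epsilon_{i_j}$ for all $j$. (v) "local $\Rightarrow$ local" at $y$: for every continuous $f\colon\mathcal{X}\to\mathbb{R}$, if $y$ is a local minimum of $f\circ\varphi$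 on $\mathcal{M}$ then $x$ is a local minimum of $f$ on $\mathcal{X}$. A neighborhood of a point is a set containing it in its interior. *)

theory Defs
  imports "HOL-Analysis.Analysis"
begin

definition open_at :: "('m::topological_space \<Rightarrow> 'x::metric_space) \<Rightarrow> 'm \<Rightarrow> bool" where
  "open_at \<phi> y \<longleftrightarrow> (\<forall>U. y \<in> interior U \<longrightarrow> \<phi> y \<in> interior (\<phi> ` U))"

definition approx_open_at :: "('m::topological_space \<Rightarrow> 'x::metric_space) \<Rightarrow> 'm \<Rightarrow> bool" where
  "approx_open_at \<phi> y \<longleftrightarrow> (\<forall>U. y \<in> interior U \<longrightarrow> \<phi> y \<in> interior (closure (\<phi> ` U)))"

definition SLP_at :: "('m::topological_space \<Rightarrow> 'x::metric_space) \<Rightarrow> 'm \<Rightarrow> bool" where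
  "SLP_at \<phi> y \<longleftrightarrow>
     (\<forall>xs::nat \<Rightarrow> 'x. xs \<longlonglongrightarrow> \<phi> y \<longrightarrow>
        (\<exists>r::nat \<Rightarrow> nat. \<exists>ys::nat \<Rightarrow> 'm. strict_mono r \<and> ys \<longlonglongrightarrow> y \<and>
            (\<forall>j. \<phi> (ys j) = xs (r j))))"

text \<open>ys j plays the role of y_{i_j}.\<close>
definition ASLP_at :: "('m::topological_space \<Rightarrow> 'x::metric_space) \<Rightarrow> 'm \<Rightarrow> bool" where
  "ASLP_at \<phi> y \<longleftrightarrow>
     (\<forall>(xs::nat \<Rightarrow> 'x) (eps::nat \<Rightarrow> real).
        xs \<longlonglongrightarrow> \<phi> y \<longrightarrow> (\<forall>i. eps i > 0) \<longrightarrow> eps \<longlonglongrightarrow> 0 \<longrightarrow>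
        (\<exists>r::nat \<Rightarrow> nat. \<exists>ys::nat \<Rightarrow> 'm. strict_mono r \<and> ys \<longlonglongrightarrow> y \<and>
            (\<forall>j. dist (\<phi> (ys j)) (xs (r j)) \<le> eps (r j))))"

definition local_min_at :: "('a::topological_space \<Rightarrow> real) \<Rightarrow> 'a \<Rightarrow> bool" where
  "local_min_at g p \<longleftrightarrow> (\<exists>U. open U \<and> p \<in> U \<and> (\<forall>z\<in>U. g p \<le> g z))"

definition local_to_local_at :: "('m::topological_space \<Rightarrow> 'x::metric_space) \<Rightarrow> 'm \<Rightarrow> bool" where
  "local_to_local_at \<phi> y \<longleftrightarrow>
     (\<forall>f::'x \<Rightarrow> real. continuous_on UNIV f \<longrightarrow>
        local_min_at (f \<circ> \<phi>) y \<longrightarrow> local_min_at f (\<phi> y))"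

end

theory Submission
  imports Defs
begin

lemma t2_Hausdorff: "Hausdorff_space (euclidean :: 'm::t2_space topology)"
  unfolding Hausdorff_space_def disjnt_def
  using hausdorff by (simp add: disjoint_iff) blast

lemma compact_nbhd:
  fixes y :: "'m::t2_space"
  assumes "locally_compact_space (euclidean :: 'm topology)" "y \<in> interior U"
  shows "\<exists>V K. open V \<and> compact K \<and> y \<in> V \<and> V \<subseteq> K \<and> K \<subseteq> U"
proof -
  have nb: "neighbourhood_base_of (compactin euclidean) (euclidean :: 'm topology)"
    using locally_compact_space_neighbourhood_base[OF disjI1[OF t2_Hausdorff], THEN iffD1, OF assms(1)] .
  have "openin euclidean (interior U)" by simp
  then have "\<exists>V K. openin euclidean V \<and> compactin euclidean K \<and> y \<in> V \<and> V \<subseteq> K \<and> K \<subseteq> interior U"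
    using nb assms(2) unfolding neighbourhood_base_of by simp
  then obtain V K where "openin euclidean V" "compactin euclidean K" "y \<in> V" "V \<subseteq> K" "K \<subseteq> interior U"
    by blast
  moreover have "interior U \<subseteq> U" by (rule interior_subset)
  ultimately show ?thesis by (intro exI[of _ V] exI[of _ K]) auto
qed

lemma open_if_approx:
  fixes \<phi> :: "'m::t2_space \<Rightarrow> 'x::metric_space"
  assumes lc: "locally_compact_space (euclidean :: 'm topology)"
    and c: "continuous_on UNIV \<phi>" and y: "y \<in> interior U"
  shows "\<exists>K. y \<in> interior K \<and> K \<subseteq> U \<and> closed (\<phi> ` K)"
proof -
  obtain V K where VK: "open V" "compact K" "y \<in> V" "V \<subseteq> K" "K \<subseteq> U"
    using compact_nbhd[OF lc y] by blast
  have "continuous_on K \<phi>" using c by (rule continuous_on_subset) simp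
  hence "compact (\<phi> ` K)" using VK(2) by (rule compact_continuous_image)
  hence "closed (\<phi> ` K)" by (rule compact_imp_closed)
  moreover have "y \<in> interior K" using VK interior_maximal by blast
  ultimately show ?thesis using VK by blast
qed

theorem theoremA2:
  fixes \<phi> :: "'m::{t2_space, second_countable_topology} \<Rightarrow> 'x::metric_space"
    and y :: 'm
  assumes "locally_compact_space (euclidean :: 'm topology)"
    and "continuous_on UNIV \<phi>"
    and "surj \<phi>"
  shows "(open_at \<phi> y \<longleftrightarrow> approx_open_at \<phi> y)
       \<and> (approx_open_at \<phi> y \<longleftrightarrow> SLP_at \<phi> y)
       \<and> (SLP_at \<phi> y \<longleftrightarrow> ASLP_at \<phi> y)
       \<and> (ASLP_at \<phi> y \<longleftrightarrow> local_to_local_at \<phi> y)"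
proof -
  have i_ii: "open_at \<phi> y \<Longrightarrow> approx_open_at \<phi> y"
    unfolding open_at_def approx_open_at_def
    by (meson closure_subset interior_mono subsetD)
  have ii_i: "approx_open_at \<phi> y \<Longrightarrow> open_at \<phi> y"
    unfolding open_at_def
  proof (intro allI impI)
    fix U assume ao: "approx_open_at \<phi> y" and yU: "y \<in> interior U"
    obtain K where K: "y \<in> interior K" "K \<subseteq> U" "closed (\<phi> ` K)"
      using open_if_approx[OF assms(1,2) yU] by blast
    have "\<phi> y \<in> interior (closure (\<phi> ` K))" using ao K(1) unfolding approx_open_at_def by blast
    also have "closure (\<phi> ` K) = \<phi> ` K" using K(3) by simp
    finally show "\<phi> y \<in> interior (\<phi> ` U)" using K(2) by (meson image_mono interior_mono subsetD)
  qed
  have i_iii: "open_at \<phi> y \<Longrightarrow> SLP_at \<phi> y"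
    unfolding SLP_at_def
  proof (intro allI impI)
    fix xs :: "nat \<Rightarrow> 'x" assume oa: "open_at \<phi> y" and xs: "xs \<longlonglongrightarrow> \<phi> y"
    obtain A :: "nat \<Rightarrow> 'm set" where A: "\<And>i. open (A i)" "\<And>i. y \<in> A i"
      "\<And>S. open S \<Longrightarrow> y \<in> S \<Longrightarrow> eventually (\<lambda>i. A i \<subseteq> S) sequentially"
      using countable_basis_at_decseq[of y] by blast
    have "\<exists>N. \<forall>i\<ge>N. xs i \<in> \<phi> ` A k" for k
    proof -
      have "\<phi> y \<in> interior (\<phi> ` A k)" using oa A(1,2) unfolding open_at_def
        by (simp add: interior_open)
      hence "eventually (\<lambda>i. xs i \<in> interior (\<phi> ` A k)) sequentially"
        by (rule topological_tendstoD[OF xs open_interior])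
      thus ?thesis unfolding eventually_sequentially using interior_subset by blast
    qed
    then obtain N where N: "\<And>k i. i \<ge> N k \<Longrightarrow> xs i \<in> \<phi> ` A k" by metis
    define r where "r k = (\<Sum>j\<le>k. N j) + k" for k
    have sm: "strict_mono r"
      by (rule strict_monoI_Suc) (simp add: r_def)
    have rN: "r k \<ge> N k" for k
    proof -
      have "N k \<le> (\<Sum>j\<le>k. N j)" by (rule member_le_sum) auto
      thus ?thesis by (simp add: r_def)
    qed
    have "\<forall>k. \<exists>z. z \<in> A k \<and> \<phi> z = xs (r k)" using N rN by (metis imageE)
    then obtain ys where ys: "\<And>k. ys k \<in> A k" "\<And>k. \<phi> (ys k) = xs (r k)" by metis
    have "ys \<longlonglongrightarrow> y"
    proof (rule topological_tendstoI)
      fix S assume "open S" "y \<in> S"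
      from A(3)[OF this] show "eventually (\<lambda>k. ys k \<in> S) sequentially"
        by eventually_elim (use ys in blast)
    qed
    thus "\<exists>r ys. strict_mono r \<and> ys \<longlonglongrightarrow> y \<and> (\<forall>j. \<phi> (ys j) = xs (r j))"
      using sm ys by blast
  qed
  have iii_iv: "SLP_at \<phi> y \<Longrightarrow> ASLP_at \<phi> y"
    unfolding SLP_at_def ASLP_at_def by (metis dist_self less_imp_le)
  have iv_ii: "ASLP_at \<phi> y \<Longrightarrow> approx_open_at \<phi> y"
  proof (rule ccontr)
    assume as: "ASLP_at \<phi> y" and nao: "\<not> approx_open_at \<phi> y"
    then obtain U where yU: "y \<in> interior U" and nx: "\<phi> y \<notin> interior (closure (\<phi> ` U))"
      unfolding approx_open_at_def by blast
    have "\<exists>z e. dist z (\<phi> y) < 1 / Suc i \<and> e > 0 \<and> e \<le> 1 / Suc i \<and> ball z (2*e) \<inter> \<phi> ` U = {}" for i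
    proof -
      have "\<not> ball (\<phi> y) (1 / Suc i) \<subseteq> closure (\<phi> ` U)"
      proof
        assume "ball (\<phi> y) (1 / Suc i) \<subseteq> closure (\<phi> ` U)"
        moreover have "\<phi> y \<in> ball (\<phi> y) (1 / Suc i)" by simp
        ultimately show False using nx interior_maximal[OF _ open_ball] by blast
      qed
      then obtain z where z: "z \<in> ball (\<phi> y) (1 / Suc i)" "z \<notin> closure (\<phi> ` U)" by blast
      then obtain d where d0: "d > 0" "\<forall>u\<in>U. \<not> dist z (\<phi> u) < d"
        using closure_approachable[of z "\<phi> ` U"] by (auto simp: dist_commute)
      hence d: "d > 0" "ball z d \<inter> \<phi> ` U = {}" by (auto simp: ball_def)
      define e where "e = min (d/2) (1 / Suc i)"
      have "e > 0" "e \<le> 1 / Suc i" "ball z (2*e) \<subseteq> ball z d" using d by (auto simp: e_def)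
      thus ?thesis using z d by (intro exI[of _ z] exI[of _ e]) (auto simp: dist_commute)
    qed
    then obtain xs eps where xe: "\<And>i. dist (xs i) (\<phi> y) < 1 / Suc i" "\<And>i. eps i > 0"
      "\<And>i. eps i \<le> 1 / Suc i" "\<And>i. ball (xs i) (2 * eps i) \<inter> \<phi> ` U = {}" by metis
    have l0: "(\<lambda>i. 1 / real (Suc i)) \<longlonglongrightarrow> 0" by (rule LIMSEQ_inverse_real_of_nat[unfolded inverse_eq_divide])
    have "xs \<longlonglongrightarrow> \<phi> y"
      by (rule tendsto_dist_iff[THEN iffD2], rule tendsto_sandwich[OF _ _ tendsto_const l0])
         (use xe(1) in \<open>auto intro!: always_eventually less_imp_le\<close>)
    moreover have "eps \<longlonglongrightarrow> 0"
      by (rule tendsto_sandwich[OF _ _ tendsto_const l0]) (use xe(2,3) in \<open>auto intro!: always_eventually less_imp_le\<close>)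
    ultimately obtain r ys where rys: "strict_mono r" "ys \<longlonglongrightarrow> y"
      "\<And>j. dist (\<phi> (ys j)) (xs (r j)) \<le> eps (r j)"
      using as xe(2) unfolding ASLP_at_def by blast
    have "eventually (\<lambda>j. ys j \<in> interior U) sequentially"
      using yU by (rule topological_tendstoD[OF rys(2) open_interior])
    then obtain j where "ys j \<in> U" using interior_subset eventually_sequentially by (metis le_refl subsetD)
    moreover have "\<phi> (ys j) \<in> ball (xs (r j)) (2 * eps (r j))"
      using rys(3)[of j] xe(2)[of "r j"] by (simp add: dist_commute)
    ultimately show False using xe(4)[of "r j"] by blast
  qed
  have i_v: "open_at \<phi> y \<Longrightarrow> local_to_local_at \<phi> y"
    unfolding local_to_local_at_def
  proof (intro allI impI)
    fix f :: "'x \<Rightarrow> real" assume oa: "open_at \<phi> y" and lm: "local_min_at (f \<circ> \<phi>) y"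
    then obtain V where V: "open V" "y \<in> V" "\<forall>z\<in>V. f (\<phi> y) \<le> f (\<phi> z)"
      unfolding local_min_at_def by auto
    have "\<phi> y \<in> interior (\<phi> ` V)" using oa V unfolding open_at_def by (simp add: interior_open)
    moreover have "\<forall>w\<in>interior (\<phi> ` V). f (\<phi> y) \<le> f w" using V(3) interior_subset by blast
    ultimately show "local_min_at f (\<phi> y)" unfolding local_min_at_def by blast
  qed
  have v_i: "local_to_local_at \<phi> y \<Longrightarrow> open_at \<phi> y"
    unfolding open_at_def
  proof (intro allI impI)
    fix U assume ll: "local_to_local_at \<phi> y" and yU: "y \<in> interior U"
    obtain K where K: "y \<in> interior K" "K \<subseteq> U" "closed (\<phi> ` K)"
      using open_if_approx[OF assms(1,2) yU] by blast
    define f where "f w = - infdist w (\<phi> ` K)" for w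
    have cf: "continuous_on UNIV f" unfolding f_def by (intro continuous_intros)
    have yK: "y \<in> K" using K(1) interior_subset by blast
    have f0: "f (\<phi> y) = 0" using yK by (simp add: f_def infdist_zero)
    have "local_min_at (f \<circ> \<phi>) y" unfolding local_min_at_def
    proof (intro exI conjI ballI)
      show "open (interior K)" "y \<in> interior K" using K by auto
      fix z assume "z \<in> interior K"
      hence "z \<in> K" using interior_subset by blast
      thus "(f \<circ> \<phi>) y \<le> (f \<circ> \<phi>) z" using f0 by (simp add: f_def infdist_zero)
    qed
    then obtain W where W: "open W" "\<phi> y \<in> W" "\<forall>w\<in>W. f (\<phi> y) \<le> f w"
      using ll cf unfolding local_to_local_at_def local_min_at_def by blast
    have "W \<subseteq> \<phi> ` K"
    proof
      fix w assume "w \<in> W"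
      hence "infdist w (\<phi> ` K) \<le> 0" using W(3) f0 by (simp add: f_def)
      hence "infdist w (\<phi> ` K) = 0" using infdist_nonneg by (metis antisym)
      thus "w \<in> \<phi> ` K" using in_closed_iff_infdist_zero[OF K(3)] yK by blast
    qed
    hence "\<phi> y \<in> interior (\<phi> ` K)" using W interior_maximal by blast
    thus "\<phi> y \<in> interior (\<phi> ` U)" using K(2) by (meson image_mono interior_mono subsetD)
  qed
  show ?thesis using i_ii ii_i i_iii iii_iv iv_ii i_v v_i by blast
qed

end
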